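(* Let $q\in\mathrm{prob}(\{0,1\}^2)$. The set $B:=\{(\pi_1,\chi^{(1)}_{1|1},\chi^{(2)}_{1|1}):(\pi,\chi)\in\Theta_2,\ \mu(\pi,\chi)=q\}$ is nonempty and equals the set of all $(\mathrm{Pr},\mathrm{Se}_1,\mathrm{Se}_2)\in[0,1]^3$ satisfying $-q_{10}\le\mathrm{Pr}(\mathrm{Se}_2-\mathrm{Se}_1)\le q_{01}$, $-q_{00}\le\mathrm{Pr}(\mathrm{Se}_1+\mathrm{Se}_2-1)\le q_{11}$, $\mathrm{Pr}-q_{0+}\le\mathrm{Pr}\,\mathrm{Se}_1\le q_{1+}$, and $\mathrm{Pr}-q_{+0}\le\mathrm{Pr}\,\mathrm{Se}_2\le q_{+1}$.
   Context: A subscript $+$ denotes summation over the replaced index, e.g. $q_{0+}=q_{00}+q_{01}$, $q_{+0}=q_{00}+q_{10}$. $\mathrm{prob}(\mathcal{X})$ is the set of probability densities on a finite set $\mathcal{X}$; $\mathrm{markov}(\mathcal{X},\mathcal{Y})$ the set of maps $(x,y)\mapsto p_{y|x}$ with $p_{\cdot|x}\in\mathrm{prob}(\mathcal{Y})$. $\Theta_2:=\mathrm{prob}(\{0,1\})\times\mathrm{markov}(\{0,1\},\{0,1\}^2)$, $\mu(\pi,\chi)_j:=\sum_{i=0}^1\pi_i\chi_{j|i}$ for $j\in\{0,1\}^2$, $\chi^{(1)}_{\iota|i}:=\chi_{\iota0|i}+\chi_{\iota1|i}$, $\chi^{(2)}_{\iota|i}:=\chi_{0\iota|i}+\chi_{1\iota|i}$.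 *)

theory Defs
  imports Main "HOL.Real"
begin

definition prob :: "'a set \<Rightarrow> ('a \<Rightarrow> real) set" where
  "prob X = {p. (\<forall>x\<in>X. 0 \<le> p x) \<and> (\<Sum>x\<in>X. p x) = 1}"

text \<open>Markov kernels: chi x y stands for chi_{y|x}.\<close>
definition markov :: "'a set \<Rightarrow> 'b set \<Rightarrow> ('a \<Rightarrow> 'b \<Rightarrow> real) set" where
  "markov X Y = {chi. \<forall>x\<in>X. chi x \<in> prob Y}"

definition Theta2 :: "((nat \<Rightarrow> real) \<times> (nat \<Rightarrow> nat \<times> nat \<Rightarrow> real)) set" where
  "Theta2 = prob {0,1} \<times> markov {0,1} ({0,1} \<times> {0,1})"

definition mu :: "(nat \<Rightarrow> real) \<Rightarrow> (nat \<Rightarrow> nat \<times> nat \<Rightarrow> real) \<Rightarrow> nat \<times> nat \<Rightarrow> real" where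
  "mu pi chi j = (\<Sum>i\<in>{0,1}. pi i * chi i j)"

text \<open>chi1 chi l i = chi^(1)_{l|i}, chi2 chi l i = chi^(2)_{l|i}.\<close>
definition chi1 :: "(nat \<Rightarrow> nat \<times> nat \<Rightarrow> real) \<Rightarrow> nat \<Rightarrow> nat \<Rightarrow> real" where
  "chi1 chi l i = chi i (l,0) + chi i (l,1)"

definition chi2 :: "(nat \<Rightarrow> nat \<times> nat \<Rightarrow> real) \<Rightarrow> nat \<Rightarrow> nat \<Rightarrow> real" where
  "chi2 chi l i = chi i (0,l) + chi i (1,l)"

end

theory Submission imports Defs begin

lemma sum4: "(\<Sum>x\<in>{0::nat,1}\<times>{0::nat,1}. f x) = f (0,0) + f (0,1) + f (1,0) + (f (1,1)::real)"
proof -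
  have "{0::nat,1}\<times>{0::nat,1} = {(0,0),(0,1),(1,0),(1,1)}" by auto
  then show ?thesis by simp
qed
lemma ball4: "(\<forall>x\<in>{0::nat,1}\<times>{0::nat,1}. P x) \<longleftrightarrow> P (0,0) \<and> P (0,1) \<and> P (1,0) \<and> P (1,1)"
  by auto

lemma nec:
  fixes p0 p1 c00 c01 c10 c11 d00 d01 d10 d11 q00 q01 q10 q11 :: real
  assumes "p0 \<ge> 0" "p1 \<ge> 0" "p0 + p1 = 1"
    "c00 \<ge> 0" "c01 \<ge> 0" "c10 \<ge> 0" "c11 \<ge> 0" "c00+c01+c10+c11 = 1"
    "d00 \<ge> 0" "d01 \<ge> 0" "d10 \<ge> 0" "d11 \<ge> 0" "d00+d01+d10+d11 = 1"
    "p0*d00 + p1*c00 = q00" "p0*d01 + p1*c01 = q01" "p0*d10 + p1*c10 = q10" "p0*d11 + p1*c11 = q11"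
  defines "P \<equiv> p1" and "S1 \<equiv> c10 + c11" and "S2 \<equiv> c01 + c11"
  shows "P \<in> {0..1} \<and> S1 \<in> {0..1} \<and> S2 \<in> {0..1} \<and>
          - q10 \<le> P * (S2 - S1) \<and> P * (S2 - S1) \<le> q01 \<and>
          - q00 \<le> P * (S1 + S2 - 1) \<and> P * (S1 + S2 - 1) \<le> q11 \<and>
          P - (q00 + q01) \<le> P * S1 \<and> P * S1 \<le> q10 + q11 \<and>
          P - (q00 + q10) \<le> P * S2 \<and> P * S2 \<le> q01 + q11"
proof -
  have a: "p1*c00 \<ge> 0" "p1*c01 \<ge> 0" "p1*c10 \<ge> 0" "p1*c11 \<ge> 0"
    "p0*d00 \<ge> 0" "p0*d01 \<ge> 0" "p0*d10 \<ge> 0" "p0*d11 \<ge> 0"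
    using assms by auto
  have e: "p1 = p1*c00 + p1*c01 + p1*c10 + p1*c11"
  proof -
    have "p1 = p1 * (c00+c01+c10+c11)" using assms by simp
    thus ?thesis by (simp add: algebra_simps)
  qed
  have f: "P * (S2 - S1) = p1*c01 - p1*c10" "P * (S1 + S2 - 1) = p1*c10 + p1*c01 + 2*(p1*c11) - p1"
    "P*S1 = p1*c10 + p1*c11" "P*S2 = p1*c01 + p1*c11"
    unfolding P_def S1_def S2_def by (simp_all add: algebra_simps)
  have "P = p1" "S1 \<in> {0..1}" "S2 \<in> {0..1}" using assms unfolding P_def S1_def S2_def by auto
  moreover have "- q10 \<le> p1 * c01 - p1 * c10 \<and>
        p1 * c01 - p1 * c10 \<le> q01 \<and>
        - q00 \<le> p1 * c10 + p1 * c01 + 2 * (p1 * c11) - p1 \<and>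
        p1 * c10 + p1 * c01 + 2 * (p1 * c11) - p1 \<le> q11 \<and>
        p1 - (q00 + q01) \<le> p1 * c10 + p1 * c11 \<and>
        p1 * c10 + p1 * c11 \<le> q10 + q11 \<and>
        p1 - (q00 + q10) \<le> p1 * c01 + p1 * c11 \<and>
        p1 * c01 + p1 * c11 \<le> q01 + q11"
    using a e assms(14-17) by (intro conjI; linarith)
  ultimately show ?thesis unfolding f using assms(1-3) by simp
qed

lemma tblock:
  fixes q00 q01 q10 q11 X1 X2 P t :: real
  assumes q: "q00 \<ge> 0" "q01 \<ge> 0" "q10 \<ge> 0" "q11 \<ge> 0"
  and hh: "- q10 \<le> X2 - X1" "X2 - X1 \<le> q01"
          "- q00 \<le> X1 + X2 - P" "X1 + X2 - P \<le> q11"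
          "P - (q00 + q01) \<le> X1" "X1 \<le> q10 + q11"
          "P - (q00 + q10) \<le> X2" "X2 \<le> q01 + q11"
  and x0: "X1 \<ge> 0" "X2 \<ge> 0" "X1 \<le> P" "X2 \<le> P"
  and tl: "0 \<le> t" "X1 - q10 \<le> t" "X2 - q01 \<le> t" "X1+X2-P \<le> t"
  and tc: "t = 0 \<or> t = X1 - q10 \<or> t = X2 - q01 \<or> t = X1+X2-P"
  shows "0 \<le> P - X1 - X2 + t \<and> P - X1 - X2 + t \<le> q00 \<and> 0 \<le> X2 - t \<and> X2 - t \<le> q01 \<and>
      0 \<le> X1 - t \<and> X1 - t \<le> q10 \<and> 0 \<le> t \<and> t \<le> q11"
  using tc
proof (elim disjE)
qed (use tl hh q x0 in \<open>intro conjI; linarith\<close>)+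

lemma suff:
  fixes q :: "nat \<times> nat \<Rightarrow> real" and P S1 S2 :: real
  assumes q: "q (0,0) \<ge> 0" "q (0,1) \<ge> 0" "q (1,0) \<ge> 0" "q (1,1) \<ge> 0"
     "q (0,0) + q (0,1) + q (1,0) + q (1,1) = 1"
  and h: "P \<in> {0..1}" "S1 \<in> {0..1}" "S2 \<in> {0..1}"
          "- q (1,0) \<le> P * (S2 - S1)" "P * (S2 - S1) \<le> q (0,1)"
          "- q (0,0) \<le> P * (S1 + S2 - 1)" "P * (S1 + S2 - 1) \<le> q (1,1)"
          "P - (q (0,0) + q (0,1)) \<le> P * S1" "P * S1 \<le> q (1,0) + q (1,1)"
          "P - (q (0,0) + q (1,0)) \<le> P * S2" "P * S2 \<le> q (0,1) + q (1,1)"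
  shows "\<exists>pi chi. (pi, chi) \<in> Theta2 \<and> (\<forall>j\<in>{0,1} \<times> {0,1}. mu pi chi j = q j)
          \<and> pi 1 = P \<and> chi1 chi 1 1 = S1 \<and> chi2 chi 1 1 = S2"
proof -
  define X1 where "X1 = P*S1"
  define X2 where "X2 = P*S2"
  have hh: "- q (1,0) \<le> X2 - X1" "X2 - X1 \<le> q (0,1)"
          "- q (0,0) \<le> X1 + X2 - P" "X1 + X2 - P \<le> q (1,1)"
          "P - (q (0,0) + q (0,1)) \<le> X1" "X1 \<le> q (1,0) + q (1,1)"
          "P - (q (0,0) + q (1,0)) \<le> X2" "X2 \<le> q (0,1) + q (1,1)"
    using h unfolding X1_def X2_def by (simp_all add: algebra_simps)
  have x0: "X1 \<ge> 0" "X2 \<ge> 0" "X1 \<le> P" "X2 \<le> P"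
    unfolding X1_def X2_def
    using mult_nonneg_nonneg[of P S1] mult_nonneg_nonneg[of P S2] mult_left_le[of S1 P] mult_left_le[of S2 P] h(1-3)
    by auto
  define t where "t = max (max 0 (X1 - q (1,0))) (max (X2 - q (0,1)) (X1+X2-P))"
  define a where "a = (\<lambda>x::nat\<times>nat. if x = (1,1) then t else if x = (1,0) then X1 - t
       else if x = (0,1) then X2 - t else P - X1 - X2 + t)"
  have av: "a (1,1) = t" "a (1,0) = X1 - t" "a (0,1) = X2 - t" "a (0,0) = P - X1 - X2 + t"
    unfolding a_def by auto
  have ab: "0 \<le> a (0,0)" "a (0,0) \<le> q (0,0)" "0 \<le> a (0,1)" "a (0,1) \<le> q (0,1)"
    "0 \<le> a (1,0)" "a (1,0) \<le> q (1,0)" "0 \<le> a (1,1)" "a (1,1) \<le> q (1,1)"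
  proof -
    have tl: "0 \<le> t" "X1 - q (1,0) \<le> t" "X2 - q (0,1) \<le> t" "X1+X2-P \<le> t" unfolding t_def by auto
    have tc: "t = 0 \<or> t = X1 - q (1,0) \<or> t = X2 - q (0,1) \<or> t = X1+X2-P" unfolding t_def by (auto simp: max_def)
    note T = tblock[OF q(1-4) hh x0 tl tc]
    from T have "0 \<le> P - X1 - X2 + t \<and> P - X1 - X2 + t \<le> q (0,0) \<and> 0 \<le> X2 - t \<and> X2 - t \<le> q (0,1) \<and>
      0 \<le> X1 - t \<and> X1 - t \<le> q (1,0) \<and> 0 \<le> t \<and> t \<le> q (1,1)" .
    then show "0 \<le> a (0,0)" "a (0,0) \<le> q (0,0)" "0 \<le> a (0,1)" "a (0,1) \<le> q (0,1)"
    "0 \<le> a (1,0)" "a (1,0) \<le> q (1,0)" "0 \<le> a (1,1)" "a (1,1) \<le> q (1,1)"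
      unfolding av by auto
  qed
  have asum: "a (0,0) + a (0,1) + a (1,0) + a (1,1) = P" unfolding av by simp
  define pd where "pd = (\<lambda>x::nat\<times>nat. (if fst x = 1 then S1 else 1 - S1) * (if snd x = 1 then S2 else 1 - S2))"
  define chi where "chi = (\<lambda>i::nat. if i = 1 then (if P = 0 then pd else (\<lambda>x. a x / P))
        else (if P = 1 then q else (\<lambda>x. (q x - a x) / (1 - P))))"
  define pi where "pi = (\<lambda>i::nat. if i = 1 then P else 1 - P)"
  have pdv: "pd (0,0) = (1-S1)*(1-S2)" "pd (0,1) = (1-S1)*S2" "pd (1,0) = S1*(1-S2)" "pd (1,1) = S1*S2"
    unfolding pd_def by auto
  have c1: "chi 1 \<in> prob ({0,1}\<times>{0,1})"
  proof (cases "P = 0")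
    case True
    have "pd (0,0) \<ge> 0" "pd (0,1) \<ge> 0" "pd (1,0) \<ge> 0" "pd (1,1) \<ge> 0"
      unfolding pdv using h by auto
    moreover have "pd (0,0) + pd (0,1) + pd (1,0) + pd (1,1) = 1"
      unfolding pdv by (simp add: algebra_simps)
    ultimately show ?thesis unfolding chi_def prob_def sum4 ball4 using True by simp
  next
    case False
    then have "P > 0" using h by simp
    then show ?thesis unfolding chi_def prob_def using ab asum False
      by (simp add: sum4 ball4 add_divide_distrib[symmetric])
  qed
  have c0: "chi 0 \<in> prob ({0,1}\<times>{0,1})"
  proof (cases "P = 1")
    case True
    then show ?thesis unfolding chi_def prob_def using q by (simp add: sum4 ball4)
  next
    case False
    then have "1 - P > 0" using h by simp
    moreover have "(q (0,0) - a (0,0)) + (q (0,1) - a (0,1)) + (q (1,0) - a (1,0)) + (q (1,1) - a (1,1)) = 1 - P"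
      using q asum by linarith
    ultimately show ?thesis unfolding chi_def prob_def using ab False
      by (simp add: sum4 ball4 add_divide_distrib[symmetric])
  qed
  have th: "(pi, chi) \<in> Theta2"
    unfolding Theta2_def markov_def using c0 c1 h by (auto simp: prob_def pi_def)
  have mu: "mu pi chi j = q j" if j: "j \<in> {0,1}\<times>{0,1}" for j
  proof -
    have m: "mu pi chi j = (1 - P) * chi 0 j + P * chi 1 j" unfolding mu_def pi_def by simp
    show ?thesis
    proof (cases "P = 0")
      case True
      then have "X1 = 0" "X2 = 0" unfolding X1_def X2_def by auto
      then have "t = 0" unfolding t_def using q True by (simp add: max_def)
      then have "a j = 0" using j av \<open>X1 = 0\<close> \<open>X2 = 0\<close> True by auto
      then show ?thesis unfolding m using True by (simp add: chi_def)
    next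
      case P0: False
      show ?thesis
      proof (cases "P = 1")
        case True
        then have "a j = q j" using j ab asum q by auto
        then show ?thesis unfolding m using True by (simp add: chi_def)
      next
        case False
        then have "1 - P \<noteq> 0" by simp
        then show ?thesis unfolding m using P0 False by (simp add: chi_def)
      qed
    qed
  qed
  have s1: "chi1 chi 1 1 = S1"
  proof (cases "P = 0")
    case True then show ?thesis unfolding chi1_def chi_def using True by (simp add: pd_def algebra_simps)
  next
    case False
    have "(a (1,0) + a (1,1)) / P = S1" using False unfolding av X1_def by simp
    then show ?thesis using False by (simp add: chi1_def chi_def add_divide_distrib)
  qed
  have s2: "chi2 chi 1 1 = S2"
  proof (cases "P = 0")
    case True then show ?thesis unfolding chi2_def chi_def using True by (simp add: pd_def algebra_simps)
  next
    case False
    have "(a (0,1) + a (1,1)) / P = S2" using False unfolding av X2_def by simp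
    then show ?thesis using False by (simp add: chi2_def chi_def add_divide_distrib)
  qed
  have "pi 1 = P" by (simp add: pi_def)
  then show ?thesis using th mu s1 s2 by blast
qed

theorem lemma4:
  fixes q :: "nat \<times> nat \<Rightarrow> real"
  assumes "q \<in> prob ({0,1} \<times> {0,1})"
  defines "B \<equiv> {(pi 1, chi1 chi 1 1, chi2 chi 1 1) | pi chi.
                  (pi, chi) \<in> Theta2 \<and> (\<forall>j\<in>{0,1} \<times> {0,1}. mu pi chi j = q j)}"
  shows "B \<noteq> {} \<and>
    B = {(Pr, Se1, Se2). Pr \<in> {0..1} \<and> Se1 \<in> {0..1} \<and> Se2 \<in> {0..1} \<and>
          - q (1,0) \<le> Pr * (Se2 - Se1) \<and> Pr * (Se2 - Se1) \<le> q (0,1) \<and>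
          - q (0,0) \<le> Pr * (Se1 + Se2 - 1) \<and> Pr * (Se1 + Se2 - 1) \<le> q (1,1) \<and>
          Pr - (q (0,0) + q (0,1)) \<le> Pr * Se1 \<and> Pr * Se1 \<le> q (1,0) + q (1,1) \<and>
          Pr - (q (0,0) + q (1,0)) \<le> Pr * Se2 \<and> Pr * Se2 \<le> q (0,1) + q (1,1)}"
proof -
  have q: "q (0,0) \<ge> 0" "q (0,1) \<ge> 0" "q (1,0) \<ge> 0" "q (1,1) \<ge> 0"
     "q (0,0) + q (0,1) + q (1,0) + q (1,1) = 1"
    using assms(1) unfolding prob_def by (auto simp: sum4)
  let ?R = "{(Pr, Se1, Se2). Pr \<in> {0..1} \<and> Se1 \<in> {0..1} \<and> Se2 \<in> {0..1} \<and>
          - q (1,0) \<le> Pr * (Se2 - Se1) \<and> Pr * (Se2 - Se1) \<le> q (0,1) \<and>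
          - q (0,0) \<le> Pr * (Se1 + Se2 - 1) \<and> Pr * (Se1 + Se2 - 1) \<le> q (1,1) \<and>
          Pr - (q (0,0) + q (0,1)) \<le> Pr * Se1 \<and> Pr * Se1 \<le> q (1,0) + q (1,1) \<and>
          Pr - (q (0,0) + q (1,0)) \<le> Pr * Se2 \<and> Pr * Se2 \<le> q (0,1) + q (1,1)}"
  have sub1: "B \<subseteq> ?R"
  proof
    fix x assume "x \<in> B"
    then obtain pi chi where x: "x = (pi 1, chi1 chi 1 1, chi2 chi 1 1)"
      and th: "(pi, chi) \<in> Theta2" and m: "\<forall>j\<in>{0,1} \<times> {0,1}. mu pi chi j = q j"
      unfolding B_def by blast
    have p: "pi 0 \<ge> 0" "pi 1 \<ge> 0" "pi 0 + pi 1 = 1" using th unfolding Theta2_def prob_def by auto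
    have c: "chi 1 \<in> prob ({0,1}\<times>{0,1})" "chi 0 \<in> prob ({0,1}\<times>{0,1})"
      using th unfolding Theta2_def markov_def by auto
    have m4: "pi 0 * chi 0 (0,0) + pi 1 * chi 1 (0,0) = q (0,0)"
      "pi 0 * chi 0 (0,1) + pi 1 * chi 1 (0,1) = q (0,1)"
      "pi 0 * chi 0 (1,0) + pi 1 * chi 1 (1,0) = q (1,0)"
      "pi 0 * chi 0 (1,1) + pi 1 * chi 1 (1,1) = q (1,1)"
      using m unfolding mu_def by auto
    have c1: "chi 1 (0,0) \<ge> 0" "chi 1 (0,1) \<ge> 0" "chi 1 (1,0) \<ge> 0" "chi 1 (1,1) \<ge> 0"
      "chi 1 (0,0) + chi 1 (0,1) + chi 1 (1,0) + chi 1 (1,1) = 1"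
      using c(1) unfolding prob_def sum4 ball4 by auto
    have c0: "chi 0 (0,0) \<ge> 0" "chi 0 (0,1) \<ge> 0" "chi 0 (1,0) \<ge> 0" "chi 0 (1,1) \<ge> 0"
      "chi 0 (0,0) + chi 0 (0,1) + chi 0 (1,0) + chi 0 (1,1) = 1"
      using c(2) unfolding prob_def sum4 ball4 by auto
    note N = nec[OF p c1 c0 m4]
    show "x \<in> ?R"
      unfolding x chi1_def chi2_def using N by (simp only: mem_Collect_eq case_prod_conv)
  qed
  have sub2: "?R \<subseteq> B"
  proof
    fix x assume "x \<in> ?R"
    then obtain P S1 S2 where x: "x = (P,S1,S2)" and hx: "(P,S1,S2) \<in> ?R" by (cases x) auto
    from hx have hs: "P \<in> {0..1}" "S1 \<in> {0..1}" "S2 \<in> {0..1}"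
          "- q (1,0) \<le> P * (S2 - S1)" "P * (S2 - S1) \<le> q (0,1)"
          "- q (0,0) \<le> P * (S1 + S2 - 1)" "P * (S1 + S2 - 1) \<le> q (1,1)"
          "P - (q (0,0) + q (0,1)) \<le> P * S1" "P * S1 \<le> q (1,0) + q (1,1)"
          "P - (q (0,0) + q (1,0)) \<le> P * S2" "P * S2 \<le> q (0,1) + q (1,1)" by auto
    from suff[OF q hs] obtain pi chi where "(pi, chi) \<in> Theta2" "\<forall>j\<in>{0,1} \<times> {0,1}. mu pi chi j = q j"
      "pi 1 = P" "chi1 chi 1 1 = S1" "chi2 chi 1 1 = S2" by blast
    then show "x \<in> B" unfolding B_def x by blast
  qed
  have "(0,0,0) \<in> ?R" using q by auto
  then have "B \<noteq> {}" using sub2 by blast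
  then show ?thesis using sub1 sub2 by blast
qed

end
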